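(* Let $m\in\mathbb{N}_{>0}$, $(\theta_1,\dots,\theta_m)\in\mathbb{R}_{>0}^m$ and $(q_1,\dots,q_m)\in(0,1)^m$. Let $\{Y_j\}_{j\in\mathbb{N}}$ (with $\mathbb{N}=\{0,1,2,\dots\}$) be independent random variables with values in $\{0,1,\dots,m\}$ such that \[ \mathbb{P}(Y_j=0)=\frac{1}{1+\sum_{\ell=1}^m\theta_\ell q_\ell^j},\qquad \mathbb{P}(Y_j=k)=\frac{\theta_k q_k^j}{1+\sum_{\ell=1}^m\theta_\ell q_\ell^j},\quad k=1,\dots,m, \] and define $X_k:=\sum_{j=0}^{\infty}\mathbf{1}(Y_j=k)$ for $k=1,\dots,m$. Then $(X_1,\dots,X_m)\overset{d}{\sim}\mathrm{He}(\theta_1,\dots,\theta_m;q_1,\dots,q_m)$.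
   Context: Multi-dimensional Heine distribution: for $(\theta_1,\dots,\theta_m)\in\mathbb{R}_{>0}^m$ and $(q_1,\dots,q_m)\in(0,1)^m$, an $\mathbb{N}^m$-valued random variable $(X_1,\dots,X_m)$ has distribution $\mathrm{He}(\theta_1,\dots,\theta_m;q_1,\dots,q_m)$ if for all $(\alpha_1,\dots,\alpha_m)\in\mathbb{N}^m$, \[ \mathbb{P}(X_1=\alpha_1,\dots,X_m=\alpha_m)=\frac{\theta_1^{\alpha_1}\cdots\theta_m^{\alpha_m}\sum_{J_1,\dots,J_m}\prod_{k=1}^m q_k^{\sum_{j\in J_k}j}}{\prod_{j=0}^{\infty}\bigl(1+\sum_{k=1}^m\theta_k q_k^j\bigr)}, \] where the sum runs over all tuples of pairwise disjoint subsets $J_1,\dots,J_m\subseteq\mathbb{N}$ with $|J_k|=\alpha_k$ for each $k$. *)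

theory Defs
  imports "HOL-Probability.Probability"
begin

text \<open>Admissible index tuples (J_1,...,J_m): pairwise disjoint finite subsets of the
  naturals with |J_k| = alpha_k; the tuple is encoded as a function on indices,
  set to the empty set outside {1..m} so that the encoding is unique.\<close>
definition heine_tuples :: "nat \<Rightarrow> (nat \<Rightarrow> nat) \<Rightarrow> (nat \<Rightarrow> nat set) set" where
  "heine_tuples m \<alpha> = {J. (\<forall>k. k \<notin> {1..m} \<longrightarrow> J k = {}) \<and>
      (\<forall>k\<in>{1..m}. finite (J k) \<and> card (J k) = \<alpha> k) \<and>
      (\<forall>k\<in>{1..m}. \<forall>l\<in>{1..m}. k \<noteq> l \<longrightarrow> J k \<inter> J l = {})}"

definition heine_pmf :: "nat \<Rightarrow> (nat \<Rightarrow> real) \<Rightarrow> (nat \<Rightarrow> real) \<Rightarrow> (nat \<Rightarrow> nat) \<Rightarrow> real" where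
  "heine_pmf m \<theta> q \<alpha> =
     (\<Prod>k=1..m. \<theta> k ^ \<alpha> k) *
     (\<Sum>\<^sub>\<infinity>J\<in>heine_tuples m \<alpha>. \<Prod>k=1..m. q k ^ (\<Sum>j\<in>J k. j)) /
     (\<Prod>j. 1 + (\<Sum>k=1..m. \<theta> k * q k ^ j))"

definition has_heine_distribution ::
  "'a measure \<Rightarrow> nat \<Rightarrow> (nat \<Rightarrow> real) \<Rightarrow> (nat \<Rightarrow> real) \<Rightarrow> (nat \<Rightarrow> 'a \<Rightarrow> ennreal) \<Rightarrow> bool" where
  "has_heine_distribution M m \<theta> q X \<longleftrightarrow>
     (\<forall>k\<in>{1..m}. X k \<in> borel_measurable M \<and> (AE \<omega> in M. X k \<omega> < \<infinity>)) \<and>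
     (\<forall>\<alpha>::nat \<Rightarrow> nat. (\<forall>k. k \<notin> {1..m} \<longrightarrow> \<alpha> k = 0) \<longrightarrow>
        measure M {\<omega> \<in> space M. \<forall>k\<in>{1..m}. X k \<omega> = of_nat (\<alpha> k)} = heine_pmf m \<theta> q \<alpha>)"

end

theory Submission
  imports Defs
begin

definition hD :: "nat \<Rightarrow> (nat \<Rightarrow> real) \<Rightarrow> (nat \<Rightarrow> real) \<Rightarrow> nat \<Rightarrow> real" where
  "hD m \<theta> q j = 1 + (\<Sum>l=1..m. \<theta> l * q l ^ j)"

definition hw :: "(nat \<Rightarrow> real) \<Rightarrow> (nat \<Rightarrow> real) \<Rightarrow> nat \<Rightarrow> nat \<Rightarrow> real" where
  "hw \<theta> q j y = (if y = 0 then 1 else \<theta> y * q y ^ j)"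

definition hg :: "nat \<Rightarrow> (nat \<Rightarrow> nat set) \<Rightarrow> nat \<Rightarrow> nat" where
  "hg m J j = (\<Sum>k\<in>{1..m}. if j \<in> J k then k else 0)"

lemma hD_ge1:
  assumes "\<forall>k\<in>{1..m}. \<theta> k > 0" "\<forall>k\<in>{1..m}. 0 < q k \<and> q k < 1"
  shows "hD m \<theta> q j \<ge> 1"
proof -
  have "\<And>l. l \<in> {1..m} \<Longrightarrow> 0 \<le> \<theta> l * q l ^ j" using assms
    by (metis less_imp_le mult_nonneg_nonneg zero_le_power)
  then have "0 \<le> (\<Sum>l=1..m. \<theta> l * q l ^ j)" by (rule sum_nonneg)
  then show ?thesis unfolding hD_def by simp
qed

lemma hD_conv:
  assumes "\<forall>k\<in>{1..m}. \<theta> k > 0" "\<forall>k\<in>{1..m}. 0 < q k \<and> q k < 1"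
  shows "convergent_prod (hD m \<theta> q)"
proof -
  have s: "summable (\<lambda>j. \<bar>\<Sum>l=1..m. \<theta> l * q l ^ j\<bar>)"
  proof -
    have "summable (\<lambda>j. \<Sum>l=1..m. \<theta> l * q l ^ j)"
      using assms by (intro summable_sum summable_mult summable_geometric) (force simp: abs_of_pos)
    moreover have "\<And>j. \<bar>\<Sum>l=1..m. \<theta> l * q l ^ j\<bar> = (\<Sum>l=1..m. \<theta> l * q l ^ j)"
      using assms by (intro abs_of_nonneg sum_nonneg) (metis less_imp_le mult_nonneg_nonneg zero_le_power)
    ultimately show ?thesis by simp
  qed
  have "\<And>j. (\<Sum>l=1..m. \<theta> l * q l ^ j) \<noteq> -1"
  proof -
    fix j have "(\<Sum>l=1..m. \<theta> l * q l ^ j) \<ge> 0" using assms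
      by (intro sum_nonneg) (metis less_imp_le mult_nonneg_nonneg zero_le_power)
    then show "(\<Sum>l=1..m. \<theta> l * q l ^ j) \<noteq> -1" by linarith
  qed
  from summable_imp_convergent_prod_real[OF s this] show ?thesis
    unfolding hD_def[abs_def] by simp
qed

lemma hD_lim:
  assumes "\<forall>k\<in>{1..m}. \<theta> k > 0" "\<forall>k\<in>{1..m}. 0 < q k \<and> q k < 1"
  shows "(\<lambda>n. \<Prod>j<n. hD m \<theta> q j) \<longlonglongrightarrow> prodinf (hD m \<theta> q)"
    and "prodinf (hD m \<theta> q) \<noteq> 0"
proof -
  show "(\<lambda>n. \<Prod>j<n. hD m \<theta> q j) \<longlonglongrightarrow> prodinf (hD m \<theta> q)"
    using convergent_prod_LIMSEQ[OF hD_conv[OF assms]]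
    by (subst LIMSEQ_lessThan_iff_atMost[where f="\<lambda>A. \<Prod>j\<in>A. hD m \<theta> q j"]) simp
  show "prodinf (hD m \<theta> q) \<noteq> 0"
    using hD_ge1[OF assms] by (intro prodinf_nonzero hD_conv[OF assms]) (metis not_one_le_zero)
qed

lemma suminf_indic_ennreal:
  "(\<Sum>j. (if P j then 1 else 0 :: ennreal)) = (if finite {j. P j} then of_nat (card {j. P j}) else \<infinity>)"
proof -
  have "(\<Sum>j. (if P j then 1 else 0 :: ennreal)) = (\<integral>\<^sup>+j. indicator {j. P j} j \<partial>count_space UNIV)"
  proof -
    have "(\<lambda>j. if P j then 1 else 0 :: ennreal) = indicator {j. P j}" by (auto simp: indicator_def)
    then show ?thesis by (simp add: nn_integral_count_space_nat)
  qed
  also have "\<dots> = emeasure (count_space UNIV) {j. P j}" by simp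
  also have "\<dots> = (if finite {j. P j} then of_nat (card {j. P j}) else \<infinity>)"
    by (rule emeasure_count_space) simp
  finally show ?thesis .
qed

lemma hg_in:
  assumes J: "J \<in> heine_tuples m \<alpha>" and k: "k \<in> {1..m}" and j: "j \<in> J k"
  shows "hg m J j = k"
proof -
  have "hg m J j = (\<Sum>k'\<in>{1..m}. if k' = k then k else 0)"
    unfolding hg_def
  proof (rule sum.cong)
    fix k' assume k': "k' \<in> {1..m}"
    show "(if j \<in> J k' then k' else 0) = (if k' = k then k else 0)"
    proof (cases "k' = k")
      case False
      then have "J k' \<inter> J k = {}" using J k k' unfolding heine_tuples_def by blast
      then show ?thesis using False j by auto
    qed (use j in auto)
  qed simp
  also have "\<dots> = k" using k by (simp add: sum.delta)
  finally show ?thesis .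
qed

lemma hg_out:
  assumes "\<forall>k\<in>{1..m}. j \<notin> J k"
  shows "hg m J j = 0"
  unfolding hg_def using assms by (intro sum.neutral) auto

lemma hg_iff:
  assumes J: "J \<in> heine_tuples m \<alpha>" and k: "k \<in> {1..m}"
  shows "hg m J j = k \<longleftrightarrow> j \<in> J k"
proof
  assume "j \<in> J k" then show "hg m J j = k" using hg_in[OF J k] by simp
next
  assume h: "hg m J j = k"
  show "j \<in> J k"
  proof (cases "\<exists>k'\<in>{1..m}. j \<in> J k'")
    case True
    then obtain k' where "k' \<in> {1..m}" "j \<in> J k'" by blast
    then show ?thesis using hg_in[OF J] h by auto
  next
    case False
    then show ?thesis using hg_out[of m j J] h k by auto
  qed
qed

lemma hg_le:
  assumes J: "J \<in> heine_tuples m \<alpha>"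
  shows "hg m J j \<le> m"
proof (cases "\<exists>k'\<in>{1..m}. j \<in> J k'")
  case True
  then obtain k' where "k' \<in> {1..m}" "j \<in> J k'" by blast
  then show ?thesis using hg_in[OF J] by fastforce
next
  case False
  then show ?thesis using hg_out[of m j J] by auto
qed

lemma hg_supp:
  assumes J: "J \<in> heine_tuples m \<alpha>"
  shows "{j. hg m J j \<noteq> 0} = (\<Union>k\<in>{1..m}. J k)"
proof (intro set_eqI iffI)
  fix j assume "j \<in> {j. hg m J j \<noteq> 0}"
  then show "j \<in> (\<Union>k\<in>{1..m}. J k)" using hg_out[of m j J] by auto
next
  fix j assume "j \<in> (\<Union>k\<in>{1..m}. J k)"
  then obtain k where "k \<in> {1..m}" "j \<in> J k" by blast
  then show "j \<in> {j. hg m J j \<noteq> 0}" using hg_in[OF J] by fastforce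
qed

lemma hg_fin:
  assumes J: "J \<in> heine_tuples m \<alpha>"
  shows "finite {j. hg m J j \<noteq> 0}"
  using J unfolding hg_supp[OF J] heine_tuples_def by auto

lemma hw_prod:
  assumes J: "J \<in> heine_tuples m \<alpha>"
  shows "(\<Prod>j\<in>{j. hg m J j \<noteq> 0}. hw \<theta> q j (hg m J j))
     = (\<Prod>k=1..m. \<theta> k ^ \<alpha> k) * (\<Prod>k=1..m. q k ^ (\<Sum>j\<in>J k. j))"
proof -
  have fin: "\<forall>k\<in>{1..m}. finite (J k)" and card: "\<forall>k\<in>{1..m}. card (J k) = \<alpha> k"
    and disj: "\<forall>k\<in>{1..m}. \<forall>l\<in>{1..m}. k \<noteq> l \<longrightarrow> J k \<inter> J l = {}"
    using J unfolding heine_tuples_def by auto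
  have "(\<Prod>j\<in>{j. hg m J j \<noteq> 0}. hw \<theta> q j (hg m J j))
      = (\<Prod>k\<in>{1..m}. \<Prod>j\<in>J k. hw \<theta> q j (hg m J j))"
    unfolding hg_supp[OF J] using fin disj by (intro prod.UNION_disjoint) auto
  also have "\<dots> = (\<Prod>k\<in>{1..m}. \<Prod>j\<in>J k. \<theta> k * q k ^ j)"
  proof (rule prod.cong[OF refl], rule prod.cong[OF refl])
    fix k j assume k: "k \<in> {1..m}" and j: "j \<in> J k"
    then show "hw \<theta> q j (hg m J j) = \<theta> k * q k ^ j"
      using hg_in[OF J k j] by (auto simp: hw_def)
  qed
  also have "\<dots> = (\<Prod>k\<in>{1..m}. \<theta> k ^ \<alpha> k * q k ^ (\<Sum>j\<in>J k. j))"
  proof (rule prod.cong[OF refl])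
    fix k assume k: "k \<in> {1..m}"
    show "(\<Prod>j\<in>J k. \<theta> k * q k ^ j) = \<theta> k ^ \<alpha> k * q k ^ (\<Sum>j\<in>J k. j)"
      using card k by (simp add: prod.distrib power_sum)
  qed
  also have "\<dots> = (\<Prod>k=1..m. \<theta> k ^ \<alpha> k) * (\<Prod>k=1..m. q k ^ (\<Sum>j\<in>J k. j))"
    by (simp add: prod.distrib)
  finally show ?thesis .
qed

lemma countable_tuples: "countable (heine_tuples m \<alpha>)"
proof -
  let ?F = "\<lambda>f::nat \<Rightarrow> nat set. \<lambda>k. if k \<in> {1..m} then f k else {}"
  have "heine_tuples m \<alpha> \<subseteq> ?F ` (Pi\<^sub>E {1..m} (\<lambda>_. Collect finite))"
  proof
    fix J assume J: "J \<in> heine_tuples m \<alpha>"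
    have out: "\<forall>k. k \<notin> {1..m} \<longrightarrow> J k = {}" and fin: "\<forall>k\<in>{1..m}. finite (J k)"
      using J unfolding heine_tuples_def by blast+
    have "J = ?F (restrict J {1..m})"
    proof (rule ext)
      fix k show "J k = ?F (restrict J {1..m}) k" using out by (cases "k \<in> {1..m}") auto
    qed
    moreover have "restrict J {1..m} \<in> Pi\<^sub>E {1..m} (\<lambda>_. Collect finite)"
      using fin by (simp add: restrict_PiE_iff)
    ultimately show "J \<in> ?F ` (Pi\<^sub>E {1..m} (\<lambda>_. Collect finite))" by blast
  qed
  moreover have "countable (Pi\<^sub>E {1..m} (\<lambda>_. Collect (finite :: nat set \<Rightarrow> bool)))"
    by (rule countable_PiE) (auto intro: countable_Collect_finite)
  ultimately show ?thesis by (meson countable_image countable_subset)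
qed

locale heine_setup = prob_space M for M :: "'a measure" +
  fixes m :: nat and \<theta> q :: "nat \<Rightarrow> real" and Y :: "nat \<Rightarrow> 'a \<Rightarrow> nat"
  assumes m_pos: "m > 0"
    and th_pos: "\<forall>k\<in>{1..m}. \<theta> k > 0"
    and q_bnd: "\<forall>k\<in>{1..m}. 0 < q k \<and> q k < 1"
    and indep: "indep_vars (\<lambda>_. count_space UNIV) Y UNIV"
    and Y_range: "\<forall>j. \<forall>\<omega>\<in>space M. Y j \<omega> \<in> {0..m}"
    and Y0: "\<forall>j. measure M {\<omega> \<in> space M. Y j \<omega> = 0} = 1 / (1 + (\<Sum>l=1..m. \<theta> l * q l ^ j))"
    and Yk: "\<forall>j. \<forall>k\<in>{1..m}. measure M {\<omega> \<in> space M. Y j \<omega> = k}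
            = \<theta> k * q k ^ j / (1 + (\<Sum>l=1..m. \<theta> l * q l ^ j))"
begin

lemma Y_meas[measurable]: "Y j \<in> measurable M (count_space UNIV)"
  using indep unfolding indep_vars_def by auto

lemma probY: "y \<le> m \<Longrightarrow> prob {\<omega>\<in>space M. Y j \<omega> = y} = hw \<theta> q j y / hD m \<theta> q j"
  using Y0 Yk unfolding hw_def hD_def
  by (cases "y = 0") auto

lemma prob_path:
  assumes g_le: "\<And>j. g j \<le> m" and fin: "finite {j. g j \<noteq> 0}"
  shows "prob {\<omega>\<in>space M. \<forall>j. Y j \<omega> = g j}
           = (\<Prod>j\<in>{j. g j \<noteq> 0}. hw \<theta> q j (g j)) / prodinf (hD m \<theta> q)"
proof -
  define A where "A n = {\<omega>\<in>space M. \<forall>j<n. Y j \<omega> = g j}" for n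
  have Aev: "A n \<in> events" for n
    unfolding A_def by measurable
  have dec: "decseq A" by (auto simp: decseq_def A_def)
  have Int: "(\<Inter>n. A n) = {\<omega>\<in>space M. \<forall>j. Y j \<omega> = g j}"
    by (auto simp: A_def)
  have pA: "prob (A n) = (\<Prod>j<n. hw \<theta> q j (g j) / hD m \<theta> q j)" for n
  proof (cases "n = 0")
    case True
    then have "A n = space M" by (auto simp: A_def)
    then show ?thesis using True by (simp add: prob_space)
  next
    case False
    have eqA: "A n = (\<Inter>j\<in>{..<n}. Y j -` {g j} \<inter> space M)"
      using False by (auto simp: A_def)
    have "prob (\<Inter>j\<in>{..<n}. Y j -` {g j} \<inter> space M) = (\<Prod>j\<in>{..<n}. prob (Y j -` {g j} \<inter> space M))"
      by (rule indep_varsD[OF indep]) (use False in auto)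
    then have "prob (A n) = (\<Prod>j\<in>{..<n}. prob (Y j -` {g j} \<inter> space M))"
      by (simp only: eqA)
    also have "\<dots> = (\<Prod>j<n. hw \<theta> q j (g j) / hD m \<theta> q j)"
    proof (rule prod.cong)
      fix j
      have "Y j -` {g j} \<inter> space M = {\<omega>\<in>space M. Y j \<omega> = g j}" by auto
      then show "prob (Y j -` {g j} \<inter> space M) = hw \<theta> q j (g j) / hD m \<theta> q j"
        using probY[OF g_le] by simp
    qed simp
    finally show ?thesis .
  qed
  have L1: "(\<lambda>n. prob (A n)) \<longlonglongrightarrow> prob {\<omega>\<in>space M. \<forall>j. Y j \<omega> = g j}"
    using finite_Lim_measure_decseq[of A] Aev dec Int by auto
  obtain N where N: "{j. g j \<noteq> 0} \<subseteq> {..<N}" using fin finite_nat_iff_bounded by auto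
  define c where "c = (\<Prod>j\<in>{j. g j \<noteq> 0}. hw \<theta> q j (g j))"
  have ev: "\<forall>\<^sub>F n in sequentially. c / (\<Prod>j<n. hD m \<theta> q j) = prob (A n)"
  proof (rule eventually_sequentiallyI[of N])
    fix n assume "N \<le> n"
    then have sub: "{j. g j \<noteq> 0} \<subseteq> {..<n}" using N by auto
    have "(\<Prod>j<n. hw \<theta> q j (g j)) = c"
      unfolding c_def using sub by (intro prod.mono_neutral_right) (auto simp: hw_def)
    then show "c / (\<Prod>j<n. hD m \<theta> q j) = prob (A n)"
      by (simp add: pA prod_dividef)
  qed
  have L2: "(\<lambda>n. c / (\<Prod>j<n. hD m \<theta> q j)) \<longlonglongrightarrow> c / prodinf (hD m \<theta> q)"
    using hD_lim[OF th_pos q_bnd] by (intro tendsto_divide tendsto_const) auto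
  have "(\<lambda>n. prob (A n)) \<longlonglongrightarrow> c / prodinf (hD m \<theta> q)"
    using Lim_transform_eventually[OF L2 ev] .
  with L1 show ?thesis unfolding c_def using LIMSEQ_unique by blast
qed


definition E :: "(nat \<Rightarrow> nat set) \<Rightarrow> 'a set" where
  "E J = {\<omega>\<in>space M. \<forall>j. Y j \<omega> = hg m J j}"

lemma E_ev: "E J \<in> events"
  unfolding E_def by measurable

lemma event_eq:
  "{\<omega>\<in>space M. \<forall>k\<in>{1..m}. (\<Sum>j. (if Y j \<omega> = k then 1 else 0 :: ennreal)) = of_nat (\<alpha> k)}
    = (\<Union>J\<in>heine_tuples m \<alpha>. E J)" (is "?L = ?R")
proof (intro set_eqI iffI)
  fix \<omega> assume w: "\<omega> \<in> ?L"
  then have sp: "\<omega> \<in> space M" by blast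
  have fc: "finite {j. Y j \<omega> = k} \<and> card {j. Y j \<omega> = k} = \<alpha> k" if k: "k \<in> {1..m}" for k
  proof -
    have "(if finite {j. Y j \<omega> = k} then of_nat (card {j. Y j \<omega> = k}) else \<infinity>) = (of_nat (\<alpha> k) :: ennreal)"
      using w k by (simp add: suminf_indic_ennreal[symmetric])
    then show ?thesis by (auto split: if_splits)
  qed
  define J where "J k = (if k \<in> {1..m} then {j. Y j \<omega> = k} else {})" for k
  have J: "J \<in> heine_tuples m \<alpha>"
    unfolding heine_tuples_def J_def using fc by auto
  have "Y j \<omega> = hg m J j" for j
  proof (cases "Y j \<omega> = 0")
    case True
    then have "\<forall>k\<in>{1..m}. j \<notin> J k" by (auto simp: J_def)
    then show ?thesis using hg_out True by metis
  next
    case False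
    then have k: "Y j \<omega> \<in> {1..m}" using Y_range sp by fastforce
    then have "j \<in> J (Y j \<omega>)" by (simp add: J_def)
    then show ?thesis using hg_in[OF J k] by simp
  qed
  then have "\<omega> \<in> E J" using sp by (simp add: E_def)
  then show "\<omega> \<in> ?R" using J by blast
next
  fix \<omega> assume "\<omega> \<in> ?R"
  then obtain J where J: "J \<in> heine_tuples m \<alpha>" and w: "\<omega> \<in> E J" by blast
  have sp: "\<omega> \<in> space M" using w by (simp add: E_def)
  have "(\<Sum>j. (if Y j \<omega> = k then 1 else 0 :: ennreal)) = of_nat (\<alpha> k)" if k: "k \<in> {1..m}" for k
  proof -
    have "{j. Y j \<omega> = k} = J k"
      using w hg_iff[OF J k] by (auto simp: E_def)
    moreover have "finite (J k)" "card (J k) = \<alpha> k" using J k unfolding heine_tuples_def by auto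
    ultimately show ?thesis by (simp add: suminf_indic_ennreal)
  qed
  then show "\<omega> \<in> ?L" using sp by blast
qed

lemma E_disj: "disjoint_family_on E (heine_tuples m \<alpha>)"
unfolding disjoint_family_on_def proof (intro ballI impI)
  fix J J' assume J: "J \<in> heine_tuples m \<alpha>" and J': "J' \<in> heine_tuples m \<alpha>" and ne: "J \<noteq> J'"
  show "E J \<inter> E J' = {}"
  proof (rule ccontr)
    assume "E J \<inter> E J' \<noteq> {}"
    then obtain \<omega> where w: "\<omega> \<in> E J" "\<omega> \<in> E J'" by blast
    have "J k = J' k" for k
    proof (cases "k \<in> {1..m}")
      case True
      have "J k = {j. Y j \<omega> = k}" using w hg_iff[OF J True] by (auto simp: E_def)
      moreover have "J' k = {j. Y j \<omega> = k}" using w hg_iff[OF J' True] by (auto simp: E_def)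
      ultimately show ?thesis by simp
    next
      case False
      then show ?thesis using J J' unfolding heine_tuples_def by blast
    qed
    then show False using ne by auto
  qed
qed

lemma prob_E:
  assumes J: "J \<in> heine_tuples m \<alpha>"
  shows "prob (E J) = (\<Prod>k=1..m. \<theta> k ^ \<alpha> k) * (\<Prod>k=1..m. q k ^ (\<Sum>j\<in>J k. j)) / prodinf (hD m \<theta> q)"
  unfolding E_def using prob_path[of "hg m J", OF hg_le[OF J] hg_fin[OF J]] hw_prod[OF J] by simp


lemma measure_event:
  "prob {\<omega>\<in>space M. \<forall>k\<in>{1..m}. (\<Sum>j. (if Y j \<omega> = k then 1 else 0 :: ennreal)) = of_nat (\<alpha> k)}
    = heine_pmf m \<theta> q \<alpha>"
proof -
  let ?T = "heine_tuples m \<alpha>"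
  let ?L = "{\<omega>\<in>space M. \<forall>k\<in>{1..m}. (\<Sum>j. (if Y j \<omega> = k then 1 else 0 :: ennreal)) = of_nat (\<alpha> k)}"
  define C where "C = (\<Prod>k=1..m. \<theta> k ^ \<alpha> k)"
  define P where "P = prodinf (hD m \<theta> q)"
  define f where "f J = C * (\<Prod>k=1..m. q k ^ (\<Sum>j\<in>J k. j)) / P" for J
  have pE: "J \<in> ?T \<Longrightarrow> prob (E J) = f J" for J
    using prob_E unfolding f_def C_def P_def by simp
  have fnn: "J \<in> ?T \<Longrightarrow> f J \<ge> 0" for J using pE[of J] measure_nonneg by metis
  have "emeasure M ?L = emeasure M (\<Union>J\<in>?T. E J)" by (simp only: event_eq)
  also have "\<dots> = (\<integral>\<^sup>+J. emeasure M (E J) \<partial>count_space ?T)"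
    by (rule emeasure_UN_countable) (auto simp: E_ev countable_tuples E_disj)
  also have "\<dots> = (\<integral>\<^sup>+J. ennreal (f J) \<partial>count_space ?T)"
    by (rule nn_integral_cong) (simp add: emeasure_eq_measure pE)
  finally have I: "(\<integral>\<^sup>+J. ennreal (f J) \<partial>count_space ?T) = ennreal (prob ?L)"
    by (simp add: emeasure_eq_measure)
  have int: "integrable (count_space ?T) f"
    by (rule integrableI_nonneg) (auto simp: I AE_count_space fnn)
  have "infsetsum f ?T = enn2real (\<integral>\<^sup>+J. ennreal (f J) \<partial>count_space ?T)"
    by (rule infsetsum_conv_nn_integral) (auto simp: I fnn)
  also have "\<dots> = prob ?L" by (simp add: I)
  finally have "prob ?L = infsum f ?T"
    using infsetsum_infsum[of f ?T] int by (simp add: abs_summable_on_def)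
  also have "\<dots> = infsum (\<lambda>J. (C / P) * (\<Prod>k=1..m. q k ^ (\<Sum>j\<in>J k. j))) ?T"
    unfolding f_def by simp
  also have "\<dots> = (C / P) * infsum (\<lambda>J. \<Prod>k=1..m. q k ^ (\<Sum>j\<in>J k. j)) ?T"
    by (rule infsum_cmult_right')
  also have "\<dots> = heine_pmf m \<theta> q \<alpha>"
    unfolding heine_pmf_def C_def P_def hD_def by simp
  finally show ?thesis .
qed

lemma X_meas: "(\<lambda>\<omega>. \<Sum>j. (if Y j \<omega> = k then 1 else 0 :: ennreal)) \<in> borel_measurable M"
  by measurable

lemma X_fin:
  assumes True: "k \<in> {1..m}"
  shows "AE \<omega> in M. (\<Sum>j. (if Y j \<omega> = k then 1 else 0 :: ennreal)) < \<infinity>"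
proof -
  let ?a = "\<lambda>j. \<theta> k * q k ^ j / hD m \<theta> q j"
  have tk: "\<theta> k > 0" "q k > 0" using True th_pos q_bnd by auto
  have ann: "?a j \<ge> 0" for j using tk hD_ge1[OF th_pos q_bnd, of j] by simp
  have sa: "summable ?a"
  proof (rule summable_comparison_test)
    show "summable (\<lambda>j. \<theta> k * q k ^ j)"
      using True q_bnd by (intro summable_mult summable_geometric) (force simp: abs_of_pos)
    show "\<exists>N. \<forall>n\<ge>N. norm (?a n) \<le> \<theta> k * q k ^ n"
    proof (intro exI allI impI)
      fix n
      have "?a n \<le> \<theta> k * q k ^ n"
        using tk hD_ge1[OF th_pos q_bnd, of n] divide_left_mono[of 1 "hD m \<theta> q n" "\<theta> k * q k ^ n"]
        by simp
      then show "norm (?a n) \<le> \<theta> k * q k ^ n" using ann[of n] by simp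
    qed
  qed
  have "(\<integral>\<^sup>+\<omega>. (\<Sum>j. (if Y j \<omega> = k then 1 else 0 :: ennreal)) \<partial>M)
      = (\<Sum>j. \<integral>\<^sup>+\<omega>. (if Y j \<omega> = k then 1 else 0 :: ennreal) \<partial>M)"
    by (rule nn_integral_suminf) measurable
  also have "\<dots> = (\<Sum>j. ennreal (?a j))"
  proof (rule suminf_cong)
    fix j
    have "(\<integral>\<^sup>+\<omega>. (if Y j \<omega> = k then 1 else 0 :: ennreal) \<partial>M)
        = (\<integral>\<^sup>+\<omega>. indicator {\<omega>\<in>space M. Y j \<omega> = k} \<omega> \<partial>M)"
      by (rule nn_integral_cong) (auto simp: indicator_def)
    also have "\<dots> = emeasure M {\<omega>\<in>space M. Y j \<omega> = k}" by (rule nn_integral_indicator) measurable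
    also have "\<dots> = ennreal (?a j)"
      using True by (simp add: emeasure_eq_measure probY hw_def)
    finally show "(\<integral>\<^sup>+\<omega>. (if Y j \<omega> = k then 1 else 0 :: ennreal) \<partial>M) = ennreal (?a j)" .
  qed
  also have "\<dots> = ennreal (\<Sum>j. ?a j)" using ann sa by (rule suminf_ennreal2)
  finally have "(\<integral>\<^sup>+\<omega>. (\<Sum>j. (if Y j \<omega> = k then 1 else 0 :: ennreal)) \<partial>M) \<noteq> \<infinity>" by simp
  from nn_integral_PInf_AE[OF X_meas this] show ?thesis by (simp add: top.not_eq_extremum)
qed
end


theorem mainTheorem1:
  fixes M :: "'a measure" and m :: nat and \<theta> q :: "nat \<Rightarrow> real" and Y :: "nat \<Rightarrow> 'a \<Rightarrow> nat"
  assumes "prob_space M"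
    and "m > 0"
    and "\<forall>k\<in>{1..m}. \<theta> k > 0"
    and "\<forall>k\<in>{1..m}. 0 < q k \<and> q k < 1"
    and "prob_space.indep_vars M (\<lambda>_. count_space UNIV) Y UNIV"
    and "\<forall>j. \<forall>\<omega>\<in>space M. Y j \<omega> \<in> {0..m}"
    and "\<forall>j. measure M {\<omega> \<in> space M. Y j \<omega> = 0} = 1 / (1 + (\<Sum>l=1..m. \<theta> l * q l ^ j))"
    and "\<forall>j. \<forall>k\<in>{1..m}. measure M {\<omega> \<in> space M. Y j \<omega> = k}
            = \<theta> k * q k ^ j / (1 + (\<Sum>l=1..m. \<theta> l * q l ^ j))"
  shows "has_heine_distribution M m \<theta> q
           (\<lambda>k \<omega>. \<Sum>j. (if Y j \<omega> = k then 1 else 0 :: ennreal))"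
proof -
  interpret H: heine_setup M m \<theta> q Y
    using assms by (simp add: heine_setup_def heine_setup_axioms_def)
  show ?thesis
    unfolding has_heine_distribution_def using H.X_meas H.X_fin H.measure_event by blast
qed

end
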